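(* Assume the setting below and define $$\alpha_{GB+ST}(t)=\max_{0\le j\le N-1}\ \sum_{k=j}^{j+N-1}(L_k+L^G_k)\,C\left\lceil\frac{t-o_{k,j}+L^G_k-L^G_j}{p}\right\rceil,\qquad t\ge0.$$ Then for all $s\in\mathbb R$ and $t\ge0$, $C$ times the Lebesgue measure of $(G\cup S)\cap[s,s+t]$ is at most $\alpha_{GB+ST}(t)$; i.e. $\alpha_{GB+ST}$ is an arrival curve of the credit-frozen part due to ST windows and guard bands.
   Context: Fix an output port with physical link rate $C>0$. Its gate control list (GCL) is periodic with period $p>0$ and contains $N\ge 1$ scheduled-traffic (ST) windows per period. Window $k\in\{0,\dots,N-1\}$ is the interval $[o_k,o_k+L_k)$, where $0\le o_0<o_1<\dots<o_{N-1}<p$, $L_k\ge 0$, $o_k+L_k\le o_{k+1}$ for $k<N-1$ and $o_{N-1}+L_{N-1}\le o_0+p$. Indices are extended to all integers periodically: $o_{k+N}=o_k+p$, $L_{k+N}=L_k$. Relative offsets are $o_{j,i}=o_j-o_i$. Let $S=\bigcup_{k\in\mathbb Z}[o_k,o_k+L_k)$. Guard bands: for each $k$, $L^G_k=\min\{\ell/C,\ o_k-(o_{k-1}+L_{k-1})\}$, where $\ell>0$ is the maximal frame size of the AVB flows of classes $M_1,\dots,M_i$ competing at the port; thus $L^G_{k+N}=L^G_k$ and the guard band of window $k$ is $[o_k-L^G_k,o_k)$. Let $G=\bigcup_{k\in\mathbb Z}[o_k-L^G_k,o_k)$. *)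

theory Defs
  imports "HOL-Analysis.Analysis"
begin

text \<open>Periodic extension of window offsets and lengths to all integer indices:
  o_{k+N} = o_k + p, L_{k+N} = L_k.  The base data are given for indices 0..N-1.\<close>

definition ext_o :: "(nat \<Rightarrow> real) \<Rightarrow> nat \<Rightarrow> real \<Rightarrow> int \<Rightarrow> real" where
  "ext_o off N p k = off (nat (k mod int N)) + real_of_int (k div int N) * p"

definition ext_L :: "(nat \<Rightarrow> real) \<Rightarrow> nat \<Rightarrow> int \<Rightarrow> real" where
  "ext_L L N k = L (nat (k mod int N))"

definition guard_len :: "real \<Rightarrow> real \<Rightarrow> (nat \<Rightarrow> real) \<Rightarrow> (nat \<Rightarrow> real) \<Rightarrow> nat \<Rightarrow> real \<Rightarrow> int \<Rightarrow> real" where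
  "guard_len C ell off L N p k =
     min (ell / C) (ext_o off N p k - (ext_o off N p (k - 1) + ext_L L N (k - 1)))"

definition ST_set :: "(nat \<Rightarrow> real) \<Rightarrow> (nat \<Rightarrow> real) \<Rightarrow> nat \<Rightarrow> real \<Rightarrow> real set" where
  "ST_set off L N p = (\<Union>k::int. {ext_o off N p k ..< ext_o off N p k + ext_L L N k})"

definition GB_set :: "real \<Rightarrow> real \<Rightarrow> (nat \<Rightarrow> real) \<Rightarrow> (nat \<Rightarrow> real) \<Rightarrow> nat \<Rightarrow> real \<Rightarrow> real set" where
  "GB_set C ell off L N p =
     (\<Union>k::int. {ext_o off N p k - guard_len C ell off L N p k ..< ext_o off N p k})"

definition alpha_GBST :: "real \<Rightarrow> real \<Rightarrow> (nat \<Rightarrow> real) \<Rightarrow> (nat \<Rightarrow> real) \<Rightarrow> nat \<Rightarrow> real \<Rightarrow> real \<Rightarrow> real" where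
  "alpha_GBST C ell off L N p t =
     Max ((\<lambda>j::int. \<Sum>k\<in>{j .. j + int N - 1}.
            (ext_L L N k + guard_len C ell off L N p k) * C *
            real_of_int \<lceil>(t - (ext_o off N p k - ext_o off N p j)
                           + guard_len C ell off L N p k - guard_len C ell off L N p j) / p\<rceil>)
          ` {0 ..< int N})"

end

theory Submission
  imports Defs
begin

lemma step_exists:
  fixes f :: "int \<Rightarrow> real"
  shows "f a \<le> s \<Longrightarrow> s < f (a + int n) \<Longrightarrow> \<exists>k. f (k-1) \<le> s \<and> s < f k"
proof (induction n)
  case 0 then show ?case by simp
next
  case (Suc n)
  show ?case
  proof (cases "s < f (a + int n)")
    case True then show ?thesis using Suc by blast
  next
    case False
    then show ?thesis using Suc.prems by (intro exI[of _ "a + int (Suc n)"]) auto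
  qed
qed

locale gcl =
  fixes C p ell :: real and N :: nat and off L :: "nat \<Rightarrow> real"
  assumes C: "C > 0" and p: "p > 0" and N: "N \<ge> 1" and ell: "ell > 0"
    and off0: "0 \<le> off 0"
    and offmono: "\<And>k. Suc k < N \<Longrightarrow> off k < off (Suc k)"
    and offlast: "off (N - 1) < p"
    and Lnn: "\<And>k. k < N \<Longrightarrow> L k \<ge> 0"
    and gap: "\<And>k. Suc k < N \<Longrightarrow> off k + L k \<le> off (Suc k)"
    and gaplast: "off (N - 1) + L (N - 1) \<le> off 0 + p"
begin

definition "ofs k = ext_o off N p k"
definition "LL k = ext_L L N k"
definition "g k = guard_len C ell off L N p k"
definition "bb k = ofs k - g k"
definition "ee k = ofs k + LL k"

lemma Npos: "int N > 0" using N by simp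

lemma ofs_shift: "ofs (k + m * int N) = ofs k + of_int m * p"
  using Npos by (simp add: ofs_def ext_o_def algebra_simps)

lemma LL_shift: "LL (k + m * int N) = LL k"
  by (simp add: LL_def ext_L_def)

lemma g_shift: "g (k + m * int N) = g k"
proof -
  have e: "k + m * int N - 1 = (k - 1) + m * int N" by simp
  show ?thesis
    using ofs_shift[of k m] ofs_shift[of "k-1" m] LL_shift[of "k-1" m]
    by (simp add: e g_def guard_len_def ofs_def[symmetric] LL_def[symmetric])
qed

lemma bb_shift: "bb (k + m * int N) = bb k + of_int m * p"
  by (simp add: bb_def ofs_shift g_shift)

lemma ee_shift: "ee (k + m * int N) = ee k + of_int m * p"
  by (simp add: ee_def ofs_shift LL_shift)

lemma ofs_base: "0 \<le> r \<Longrightarrow> r < int N \<Longrightarrow> ofs r = off (nat r)"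
  by (simp add: ofs_def ext_o_def)

lemma LL_base: "0 \<le> r \<Longrightarrow> r < int N \<Longrightarrow> LL r = L (nat r)"
  by (simp add: LL_def ext_L_def)

lemma decomp: "k = k mod int N + (k div int N) * int N"
  by simp

lemma LL_nn: "LL k \<ge> 0"
proof -
  have "0 \<le> k mod int N" "k mod int N < int N" using Npos by auto
  then show ?thesis unfolding LL_def ext_L_def using Lnn by (simp add: nat_less_iff)
qed

lemma ee_le_next: "ee k \<le> ofs (k + 1)"
proof -
  define r where "r = k mod int N"
  define q where "q = k div int N"
  have r0: "0 \<le> r" and rN: "r < int N" using Npos by (auto simp: r_def)
  have k: "k = r + q * int N" by (simp add: r_def q_def)
  have eek: "ee k = off (nat r) + L (nat r) + of_int q * p"
    using k ee_shift[of r q] ofs_base[OF r0 rN] LL_base[OF r0 rN] by (simp add: ee_def)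
  show ?thesis
  proof (cases "r + 1 < int N")
    case True
    have "ofs (k+1) = ofs (r+1) + of_int q * p" using k ofs_shift[of "r+1" q]
      by (simp add: algebra_simps)
    also have "ofs (r+1) = off (Suc (nat r))" using ofs_base[of "r+1"] True r0
      by (simp add: Suc_nat_eq_nat_zadd1 add.commute)
    finally show ?thesis using eek gap[of "nat r"] True r0 by linarith
  next
    case False
    then have rr: "r = int N - 1" using rN by simp
    have "k + 1 = 0 + (q + 1) * int N" using k rr by (simp add: algebra_simps)
    then have "ofs (k+1) = ofs 0 + of_int (q+1) * p" using ofs_shift[of 0 "q+1"] by simp
    also have "ofs 0 = off 0" using ofs_base[of 0] Npos by simp
    finally have "ofs (k+1) = off 0 + of_int q * p + p" by (simp add: algebra_simps)
    moreover have "nat r = N - 1" using rr by simp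
    ultimately show ?thesis using eek gaplast by simp
  qed
qed

lemma g_nn: "g k \<ge> 0"
proof -
  have "ee (k-1) \<le> ofs k" using ee_le_next[of "k-1"] by simp
  then show ?thesis using ell C
    by (simp add: g_def guard_len_def ofs_def[symmetric] LL_def[symmetric] ee_def)
qed

lemma g_le: "g k \<le> ofs k - ee (k-1)"
  by (simp add: g_def guard_len_def ofs_def[symmetric] LL_def[symmetric] ee_def)

lemma ee_bb: "ee k \<le> bb (k+1)"
  using g_le[of "k+1"] by (simp add: bb_def)

lemma bb_ee: "bb k \<le> ee k"
  using g_nn[of k] LL_nn[of k] by (simp add: bb_def ee_def)

lemma bb_mono_n: "bb i \<le> bb (i + int n)"
proof (induction n)
  case 0 then show ?case by simp
next
  case (Suc n)
  have "bb (i + int n) \<le> bb (i + int n + 1)"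
    using bb_ee[of "i + int n"] ee_bb[of "i + int n"] by linarith
  then show ?case using Suc by (simp add: algebra_simps)
qed

lemma bb_mono: "i \<le> k \<Longrightarrow> bb i \<le> bb k"
  using bb_mono_n[of i "nat (k - i)"] by simp

lemma ee_bb_lt: "i < k \<Longrightarrow> ee i \<le> bb k"
  using ee_bb[of i] bb_mono[of "i+1" k] by simp

lemma ee_mono: "i \<le> k \<Longrightarrow> ee i \<le> ee k"
  using ee_bb_lt[of i k] bb_ee[of k] by (cases "i = k") auto

definition "II k = {bb k ..< ee k}"
definition "UU = (\<Union>k. II k)"

lemma U_eq: "GB_set C ell off L N p \<union> ST_set off L N p = UU"
proof -
  have "{ofs k - g k ..< ofs k} \<union> {ofs k ..< ofs k + LL k} = II k" for k
    using g_nn[of k] LL_nn[of k] by (auto simp: II_def bb_def ee_def)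
  then show ?thesis
    unfolding GB_set_def ST_set_def UU_def ofs_def[symmetric] LL_def[symmetric] g_def[symmetric]
    by blast
qed

lemma II_sets: "II k \<in> sets lebesgue" by (simp add: II_def)

lemma U_sets: "UU \<in> sets lebesgue"
  unfolding UU_def by (rule sets.countable_UN'') (auto simp: II_sets)

lemma U_fm: "UU \<inter> {a..b} \<in> fmeasurable lebesgue"
  by (subst Int_commute) (rule fmeasurable_Int_fmeasurable, simp, rule U_sets)

lemma UI_sets: "UU \<inter> {a..b} \<in> sets lebesgue"
  using U_fm by blast

lemma in_U_index: "x \<in> UU \<Longrightarrow> \<exists>i. bb i \<le> x \<and> x < ee i"
  by (auto simp: UU_def II_def)

lemma gapfree: "ee (k-1) \<le> x \<Longrightarrow> x < bb k \<Longrightarrow> x \<notin> UU"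
proof
  assume a: "ee (k-1) \<le> x" "x < bb k" "x \<in> UU"
  then obtain i where i: "bb i \<le> x" "x < ee i" using in_U_index by blast
  show False
  proof (cases "i \<le> k - 1")
    case True then show False using ee_mono[OF True] a i by linarith
  next
    case False then have "k \<le> i" by simp
    then show False using bb_mono[of k i] a i by linarith
  qed
qed

lemma shift:
  assumes s1: "ee (k0-1) \<le> s" and s2: "s < ee k0" and t: "t \<ge> 0"
  shows "measure lebesgue (UU \<inter> {s..s+t}) \<le> measure lebesgue (UU \<inter> {bb k0..bb k0 + t})"
proof -
  define b where "b = bb k0"
  have Ik0: "{b..<ee k0} \<subseteq> UU" by (auto simp: UU_def II_def b_def)
  consider "s \<le> b" | "b < s" "s \<le> b + t" | "b + t < s" by linarith
  then show ?thesis
  proof cases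
    case 1
    have "UU \<inter> {s..s+t} \<subseteq> UU \<inter> {b..b+t}"
    proof
      fix x assume x: "x \<in> UU \<inter> {s..s+t}"
      have "\<not> x < b" using gapfree[of k0 x] s1 x by (auto simp: b_def)
      then show "x \<in> UU \<inter> {b..b+t}" using x 1 by auto
    qed
    then show ?thesis
      by (intro measure_mono_fmeasurable) (auto simp: b_def UI_sets U_fm)
  next
    case 2
    define V where "V = UU \<inter> {s..b+t}"
    have Vfm: "V \<in> fmeasurable lebesgue" unfolding V_def using U_fm by blast
    have "measure lebesgue (UU \<inter> {s..s+t}) \<le> measure lebesgue (V \<union> {b+t..s+t})"
      by (intro measure_mono_fmeasurable) (auto simp: V_def UI_sets U_fm intro!: fmeasurable.Un)
    also have "\<dots> \<le> measure lebesgue V + measure lebesgue {b+t..s+t}"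
      by (rule measure_Un_le) (use Vfm in auto)
    also have "measure lebesgue {b+t..s+t} = s - b" using 2 by simp
    also have "measure lebesgue V + (s - b) = measure lebesgue ({b..<s} \<union> V)"
    proof -
      have "V - {b..<s} = V" by (auto simp: V_def)
      moreover have "{b..<s} \<in> fmeasurable lebesgue" by (rule fmeasurableI2[of "{b..s}"]) auto
      ultimately show ?thesis using measure_Un2[of "{b..<s}" lebesgue V] Vfm 2 by simp
    qed
    also have "\<dots> \<le> measure lebesgue (UU \<inter> {b..b+t})"
    proof (intro measure_mono_fmeasurable)
      show "{b..<s} \<union> V \<subseteq> UU \<inter> {b..b + t}" using Ik0 2 s2 by (auto simp: V_def)
    qed (use Vfm U_fm in auto)
    finally show ?thesis by (simp add: b_def)
  next
    case 3
    have "measure lebesgue (UU \<inter> {s..s+t}) \<le> measure lebesgue {s..s+t}"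
      by (intro measure_mono_fmeasurable) (auto simp: UI_sets)
    also have "\<dots> = t" using t by simp
    also have "UU \<inter> {b..b+t} = {b..b+t}" using Ik0 3 s2 t by auto
    then have "t = measure lebesgue (UU \<inter> {b..b+t})" using t by simp
    finally show ?thesis by (simp add: b_def)
  qed
qed

lemma exists_k0: "\<exists>k. ee (k-1) \<le> s \<and> s < ee k"
proof -
  define m1 where "m1 = \<lceil>(s - ee 0)/p\<rceil> + 1"
  define m2 where "m2 = \<lfloor>(s - ee 0)/p\<rfloor>"
  have e1: "ee (m1 * int N) = ee 0 + of_int m1 * p" using ee_shift[of 0 m1] by simp
  have e2: "ee (m2 * int N) = ee 0 + of_int m2 * p" using ee_shift[of 0 m2] by simp
  have "(s - ee 0)/p < of_int m1" unfolding m1_def by linarith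
  then have A: "s < ee (m1 * int N)" using e1 p by (simp add: field_simps)
  have "of_int m2 \<le> (s - ee 0)/p" unfolding m2_def by linarith
  then have B: "ee (m2 * int N) \<le> s" using e2 p by (simp add: field_simps)
  have "m2 \<le> m1" unfolding m1_def m2_def by linarith
  then have "m2 * int N \<le> m1 * int N" using Npos by simp
  then have "m1 * int N = m2 * int N + int (nat (m1 * int N - m2 * int N))" by simp
  then show ?thesis using step_exists[of ee "m2 * int N" s "nat (m1 * int N - m2 * int N)"] A B
    by metis
qed


lemma Ico_fm: "{a..<b::real} \<in> fmeasurable lebesgue"
  by (rule fmeasurableI2[of "{a..b}"]) auto

lemma II_fm: "II k \<in> fmeasurable lebesgue"
  unfolding II_def by (rule Ico_fm)

lemma II_meas: "measure lebesgue (II k) = ee k - bb k"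
  using bb_ee[of k] by (simp add: II_def)

definition "nn t b k = nat \<lceil>(t - (bb k - b))/p\<rceil>"

lemma cover:
  "UU \<inter> {bb k0..bb k0+t} \<subseteq> {bb k0 + t} \<union>
     (\<Union>k\<in>{k0..k0+int N-1}. \<Union>m\<in>{..<nn t (bb k0) k}. II (k + int m * int N))"
proof
  fix x assume x: "x \<in> UU \<inter> {bb k0..bb k0+t}"
  show "x \<in> {bb k0 + t} \<union>
     (\<Union>k\<in>{k0..k0+int N-1}. \<Union>m\<in>{..<nn t (bb k0) k}. II (k + int m * int N))"
  proof (cases "x = bb k0 + t")
    case True then show ?thesis by simp
  next
    case False
    then have xl: "x < bb k0 + t" using x by auto
    obtain i where i: "bb i \<le> x" "x < ee i" using x in_U_index by blast
    have ik: "k0 \<le> i"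
    proof (rule ccontr)
      assume "\<not> k0 \<le> i"
      then have "ee i \<le> bb k0" using ee_bb_lt[of i k0] by simp
      then show False using i x by auto
    qed
    define d where "d = i - k0"
    define k where "k = k0 + d mod int N"
    define m where "m = nat (d div int N)"
    have d0: "0 \<le> d" using ik d_def by simp
    have "0 \<le> d div int N" using d0 Npos by (simp add: pos_imp_zdiv_nonneg_iff)
    then have m: "int m = d div int N" by (simp add: m_def)
    have ieq: "i = k + int m * int N" using m by (simp add: k_def d_def)
    have krange: "k \<in> {k0..k0+int N-1}" using Npos
      by (auto simp: k_def)
    have "bb i = bb k + real m * p" using bb_shift[of k "int m"] ieq by simp
    then have "real m * p < t - (bb k - bb k0)" using i xl by linarith
    then have "real m < (t - (bb k - bb k0)) / p" using p by (simp add: field_simps)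
    then have "real m < of_int \<lceil>(t - (bb k - bb k0)) / p\<rceil>"
      by (meson le_of_int_ceiling less_le_trans)
    then have "m < nn t (bb k0) k" unfolding nn_def by linarith
    moreover have "x \<in> II (k + int m * int N)" using i ieq by (simp add: II_def)
    ultimately show ?thesis using krange by blast
  qed
qed

lemma meas_bound:
  "measure lebesgue (UU \<inter> {bb k0..bb k0+t}) \<le>
     (\<Sum>k\<in>{k0..k0+int N-1}. real (nn t (bb k0) k) * (ee k - bb k))"
proof -
  define W where "W = (\<Union>k\<in>{k0..k0+int N-1}. \<Union>m\<in>{..<nn t (bb k0) k}. II (k + int m * int N))"
  have Wfm: "W \<in> fmeasurable lebesgue" unfolding W_def
    by (intro fmeasurable.finite_UN) (auto simp: II_fm)
  have "measure lebesgue (UU \<inter> {bb k0..bb k0+t}) \<le> measure lebesgue ({bb k0 + t} \<union> W)"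
  proof (intro measure_mono_fmeasurable)
    show "{bb k0 + t} \<union> W \<in> fmeasurable lebesgue"
      by (intro fmeasurable.Un Wfm fmeasurableI_null_sets) auto
  qed (use cover[of k0 t] UI_sets in \<open>auto simp: W_def\<close>)
  also have "\<dots> \<le> measure lebesgue {bb k0 + t} + measure lebesgue W"
    by (rule measure_Un_le) (use Wfm in auto)
  also have "\<dots> = measure lebesgue W" by simp
  also have "\<dots> \<le> (\<Sum>k\<in>{k0..k0+int N-1}. measure lebesgue (\<Union>m\<in>{..<nn t (bb k0) k}. II (k + int m * int N)))"
    unfolding W_def by (rule measure_UNION_le) (auto intro!: sets.finite_UN simp: II_sets)
  also have "\<dots> \<le> (\<Sum>k\<in>{k0..k0+int N-1}. (\<Sum>m\<in>{..<nn t (bb k0) k}. measure lebesgue (II (k + int m * int N))))"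
    by (intro sum_mono measure_UNION_le) (auto simp: II_sets)
  also have "\<dots> = (\<Sum>k\<in>{k0..k0+int N-1}. real (nn t (bb k0) k) * (ee k - bb k))"
    by (simp add: II_meas bb_shift ee_shift)
  finally show ?thesis .
qed

lemma term_bound:
  assumes "k \<in> {k0..k0+int N-1}" and t: "t \<ge> 0"
  shows "real (nn t (bb k0) k) * (ee k - bb k) \<le> (ee k - bb k) * of_int \<lceil>(t - (bb k - bb k0))/p\<rceil>"
proof (cases "ee k - bb k = 0")
  case True then show ?thesis by simp
next
  case False
  then have w: "ee k - bb k > 0" using bb_ee[of k] by linarith
  have "ee k \<le> bb (k0 + 1 * int N)" using assms by (intro ee_bb_lt) auto
  then have "ee k \<le> bb k0 + p" using bb_shift[of k0 1] by simp
  then have "-1 < (t - (bb k - bb k0))/p" using w p t by (simp add: field_simps)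
  then have c: "0 \<le> \<lceil>(t - (bb k - bb k0))/p\<rceil>"
    by simp
  then have "real (nn t (bb k0) k) = of_int \<lceil>(t - (bb k - bb k0))/p\<rceil>"
    unfolding nn_def by simp
  then show ?thesis by simp
qed


lemma main:
  assumes t: "t \<ge> 0"
  shows "C * measure lebesgue (UU \<inter> {s..s+t}) \<le> alpha_GBST C ell off L N p t"
proof -
  obtain k0 where k0: "ee (k0-1) \<le> s" "s < ee k0" using exists_k0 by blast
  define h where "h j k = (LL k + g k) * C * of_int \<lceil>(t - (ofs k - ofs j) + g k - g j)/p\<rceil>" for j k
  have alpha: "alpha_GBST C ell off L N p t = Max ((\<lambda>j. \<Sum>k\<in>{j..j+int N-1}. h j k) ` {0..<int N})"
    by (simp add: alpha_GBST_def h_def ofs_def LL_def g_def)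
  have "C * measure lebesgue (UU \<inter> {s..s+t}) \<le> C * measure lebesgue (UU \<inter> {bb k0..bb k0+t})"
    using shift[OF k0 t] C by simp
  also have "\<dots> \<le> C * (\<Sum>k\<in>{k0..k0+int N-1}. real (nn t (bb k0) k) * (ee k - bb k))"
    using meas_bound[of k0 t] C by simp
  also have "\<dots> \<le> C * (\<Sum>k\<in>{k0..k0+int N-1}. (ee k - bb k) * of_int \<lceil>(t - (bb k - bb k0))/p\<rceil>)"
    using C by (intro mult_left_mono sum_mono term_bound t) auto
  also have "\<dots> = (\<Sum>k\<in>{k0..k0+int N-1}. h k0 k)"
  proof -
    have "(ee k - bb k) * of_int \<lceil>(t - (bb k - bb k0))/p\<rceil> * C = h k0 k" for k
    proof -
      have e1: "t - (bb k - bb k0) = t - (ofs k - ofs k0) + g k - g k0" by (simp add: bb_def)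
      have e2: "ee k - bb k = LL k + g k" by (simp add: bb_def ee_def)
      show ?thesis unfolding h_def e1 e2 by simp
    qed
    then show ?thesis by (simp add: sum_distrib_left mult.commute)
  qed
  also have "\<dots> = (\<Sum>k\<in>{k0 mod int N..k0 mod int N+int N-1}. h (k0 mod int N) k)"
  proof -
    define j where "j = k0 mod int N"
    define q where "q = k0 div int N"
    have k0e: "k0 = j + q * int N" by (simp add: j_def q_def)
    have hs: "h (j + q * int N) (k + q * int N) = h j k" for k
      by (simp add: h_def ofs_shift LL_shift g_shift)
    have se: "{k0..k0+int N-1} = plus (q * int N) ` {j..j+int N-1}"
      by (simp add: k0e algebra_simps)
    have "(\<Sum>k\<in>plus (q * int N) ` {j..j+int N-1}. h k0 k) = (\<Sum>k\<in>{j..j+int N-1}. h k0 (q * int N + k))"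
      by (rule trans[OF sum.reindex]) (auto simp: inj_on_def)
    then have "(\<Sum>k\<in>{k0..k0+int N-1}. h k0 k) = (\<Sum>k\<in>{j..j+int N-1}. h k0 (q * int N + k))"
      unfolding se .
    also have "\<dots> = (\<Sum>k\<in>{j..j+int N-1}. h j k)"
      using hs by (simp add: k0e add.commute)
    finally show ?thesis by (simp add: j_def)
  qed
  also have "\<dots> \<le> alpha_GBST C ell off L N p t"
    unfolding alpha using Npos by (intro Max_ge) auto
  finally show ?thesis .
qed

end

theorem lemma2:
  fixes C p ell :: real and N :: nat and off L :: "nat \<Rightarrow> real" and s t :: real
  assumes "C > 0" and "p > 0" and "N \<ge> 1" and "ell > 0"
    and "0 \<le> off 0"
    and "\<And>k. Suc k < N \<Longrightarrow> off k < off (Suc k)"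
    and "off (N - 1) < p"
    and "\<And>k. k < N \<Longrightarrow> L k \<ge> 0"
    and "\<And>k. Suc k < N \<Longrightarrow> off k + L k \<le> off (Suc k)"
    and "off (N - 1) + L (N - 1) \<le> off 0 + p"
    and "t \<ge> 0"
  shows "C * measure lebesgue ((GB_set C ell off L N p \<union> ST_set off L N p) \<inter> {s .. s + t})
           \<le> alpha_GBST C ell off L N p t"
proof -
  interpret gcl C p ell N off L using assms by unfold_locales auto
  show ?thesis using main[OF assms(11), of s] U_eq by simp
qed

end
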